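(* There is a sufficiently small absolute constant $c_1>0$ such that the following holds for $d$ sufficiently large. Let $K=\exp(c_1 s)$. For any fixed $\mathbf{A}\in\mathcal{A}_{\mathsf{suc}}$ and any fixed unit vectors $\mathbf{y}_1,\dots,\mathbf{y}_K\in\mathbb{S}^d$, $$\Pr_{\mathbf{v}\sim\frac1{\sqrt d}\mathcal{H}_d}\Big[\|\mathbf{A}\mathbf{x}_{\mathbf{A},\mathbf{v}}\|_\infty\le\xi'\ \wedge\ \|\mathbf{x}_{\mathbf{A},\mathbf{v}}-\mathbf{y}_i\|_2>d^{-8}\ \ \forall i\in[K]\Big]\ge\frac18.$$
   Context: Setting: $d$ large, $\delta\in(0,1)$, $k=d^{1-\delta-o(1)}$, $s=d^{1-\delta/2}\log^2 d$, $\xi=2\exp(-\log^5 d)$, $\xi'=\sqrt d\xi$, $\mathcal{H}_d=\{-1,1\}^d$, $\mathbb{S}^d$ the unit sphere in $\mathbb{R}^d$. A fixed deterministic $(k,n)$-protocol for the correlated orthogonal vector game is given: Alice, on $\mathbf{A}\in\{-1,1\}^{(d/2)\times d}$, sends $\mathbf{M}_\mathbf{A}\in\{0,1\}^{kd}$; after receiving Bob's $\mathbf{v}\in\frac1{\sqrt d}\mathcal{H}_d$, she sends $\mathbf{R}_{\mathbf{A},\mathbf{v}}=(\mathbf{r}_1,\dots,\mathbf{r}_n)$ with each $\mathbf{r}_i$ a row of $\mathbf{A}$ or $\mathsf{nil}$; Bob outputs $\mathbf{x}_{\mathbf{M},\mathbf{v},\mathbf{R}}\in\mathbb{S}^d$,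 a unit vector defined for every $\mathbf{M}\in\{0,1\}^{kd}$, $\mathbf{v}$, $\mathbf{R}\in(\{-1,1\}^d\cup\{\mathsf{nil}\})^n$. Write $\mathbf{x}_{\mathbf{A},\mathbf{v}}=\mathbf{x}_{\mathbf{M}_\mathbf{A},\mathbf{v},\mathbf{R}_{\mathbf{A},\mathbf{v}}}$. The protocol succeeds on $(\mathbf{A},\mathbf{v})$ if $\|\mathbf{A}\mathbf{x}_{\mathbf{A},\mathbf{v}}\|_\infty\le\xi'$ and $|\langle\mathbf{v},\mathbf{x}_{\mathbf{A},\mathbf{v}}\rangle|\ge\sqrt{s/d}$, and it succeeds with probability at least $1/2$ over uniform $(\mathbf{A},\mathbf{v})$. $\mathcal{A}_{\mathsf{suc}}$ is the set of $\mathbf{A}\in\{-1,1\}^{(d/2)\times d}$ on which the protocol succeeds with probability at least $1/4$ over uniform $\mathbf{v}\in\frac1{\sqrt d}\mathcal{H}_d$. *)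

theory Defs
  imports Complex_Main "HOL-Library.FuncSet"
begin

text \<open>Vectors in R^d are functions nat => real supported on {0..<d};
  a (d/2) x d matrix is nat => nat => real, row i being the function A i.\<close>

definition unif_prob :: "'a set \<Rightarrow> ('a \<Rightarrow> bool) \<Rightarrow> real" where
  "unif_prob S P = real (card {x \<in> S. P x}) / real (card S)"

definition hcube :: "nat \<Rightarrow> (nat \<Rightarrow> real) set" where
  "hcube d = {0..<d} \<rightarrow>\<^sub>E {- 1 / sqrt (real d), 1 / sqrt (real d)}"

definition signvecs :: "nat \<Rightarrow> (nat \<Rightarrow> real) set" where
  "signvecs d = {0..<d} \<rightarrow>\<^sub>E {- 1, 1}"

definition sign_mats :: "nat \<Rightarrow> (nat \<Rightarrow> nat \<Rightarrow> real) set" where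
  "sign_mats d = {0..<d div 2} \<rightarrow>\<^sub>E signvecs d"

definition unit_vec :: "nat \<Rightarrow> (nat \<Rightarrow> real) \<Rightarrow> bool" where
  "unit_vec d x \<longleftrightarrow> (\<forall>j\<ge>d. x j = 0) \<and> (\<Sum>j<d. (x j)\<^sup>2) = 1"

definition s_par :: "nat \<Rightarrow> real \<Rightarrow> real" where
  "s_par d \<delta> = real d powr (1 - \<delta> / 2) * (ln (real d))\<^sup>2"

definition xi :: "nat \<Rightarrow> real" where
  "xi d = 2 * exp (- ((ln (real d)) ^ 5))"

definition xi' :: "nat \<Rightarrow> real" where
  "xi' d = sqrt (real d) * xi d"

definition succeeds :: "nat \<Rightarrow> real \<Rightarrow> (nat \<Rightarrow> nat \<Rightarrow> real) \<Rightarrow> (nat \<Rightarrow> real) \<Rightarrow> (nat \<Rightarrow> real) \<Rightarrow> bool" where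
  "succeeds d \<delta> A v x \<longleftrightarrow>
     (\<forall>i<d div 2. \<bar>\<Sum>j<d. A i j * x j\<bar> \<le> xi' d) \<and>
     \<bar>\<Sum>j<d. v j * x j\<bar> \<ge> sqrt (s_par d \<delta> / real d)"

text \<open>Alice's second message: n entries, each a row of A or nil (None)\<close>
definition valid_resp :: "nat \<Rightarrow> nat \<Rightarrow> (nat \<Rightarrow> nat \<Rightarrow> real) \<Rightarrow> (nat \<Rightarrow> real) option list \<Rightarrow> bool" where
  "valid_resp d n A R \<longleftrightarrow> length R = n \<and> (\<forall>r\<in>set R. r = None \<or> (\<exists>i<d div 2. r = Some (A i)))"

definition bob_dom :: "nat \<Rightarrow> nat \<Rightarrow> (nat \<Rightarrow> real) option list \<Rightarrow> bool" where
  "bob_dom d n R \<longleftrightarrow> length R = n \<and> (\<forall>r\<in>set R. r = None \<or> (\<exists>u\<in>signvecs d. r = Some u))"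

definition out_vec where
  "out_vec msg resp bob A v = bob (msg A) v (resp A v)"

definition good_protocol ::
  "nat \<Rightarrow> real \<Rightarrow> nat \<Rightarrow> nat \<Rightarrow> ((nat \<Rightarrow> nat \<Rightarrow> real) \<Rightarrow> bool list)
   \<Rightarrow> ((nat \<Rightarrow> nat \<Rightarrow> real) \<Rightarrow> (nat \<Rightarrow> real) \<Rightarrow> (nat \<Rightarrow> real) option list)
   \<Rightarrow> (bool list \<Rightarrow> (nat \<Rightarrow> real) \<Rightarrow> (nat \<Rightarrow> real) option list \<Rightarrow> (nat \<Rightarrow> real)) \<Rightarrow> bool" where
  "good_protocol d \<delta> k n msg resp bob \<longleftrightarrow>
     (\<forall>A\<in>sign_mats d. length (msg A) = k * d) \<and>
     (\<forall>A\<in>sign_mats d. \<forall>v\<in>hcube d. valid_resp d n A (resp A v)) \<and>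
     (\<forall>M v R. length M = k * d \<longrightarrow> v \<in> hcube d \<longrightarrow> bob_dom d n R \<longrightarrow> unit_vec d (bob M v R)) \<and>
     unif_prob (sign_mats d \<times> hcube d)
        (\<lambda>(A, v). succeeds d \<delta> A v (out_vec msg resp bob A v)) \<ge> 1 / 2"

definition A_suc where
  "A_suc d \<delta> msg resp bob =
     {A \<in> sign_mats d. unif_prob (hcube d) (\<lambda>v. succeeds d \<delta> A v (out_vec msg resp bob A v)) \<ge> 1 / 4}"

end

theory Submission imports Defs "HOL-Probability.Hoeffding" begin

lemma cosh_bound: "exp (x::real) + exp (-x) \<le> 2 * exp (x\<^sup>2/2)"
proof -
  have key: "exp x + exp (-x) \<le> 2 * exp (x\<^sup>2/2)" if "x \<ge> 0" for x :: real
  proof -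
    have "-(2*x) * (1/2) + ln (1 + (1/2) * (exp (2*x) - 1)) \<le> (2*x)\<^sup>2/8"
      by (rule Hoeffdings_lemma_aux) (use that in auto)
    hence "ln ((1 + exp (2*x))/2) \<le> x + x\<^sup>2/2" by (simp add: power2_eq_square field_simps)
    hence "(1 + exp (2*x))/2 \<le> exp (x + x\<^sup>2/2)"
      by (metis add_pos_pos divide_pos_pos exp_gt_zero exp_ln ln_le_cancel_iff zero_less_one zero_less_numeral ln_exp)
    hence "(1 + exp (2*x))/2 * exp (-x) \<le> exp (x + x\<^sup>2/2) * exp (-x)" by simp
    moreover have "(1 + exp (2*x))/2 * exp (-x) = (exp x + exp (-x))/2"
      by (simp add: field_simps flip: exp_add)
    moreover have "exp (x + x\<^sup>2/2) * exp (-x) = exp (x\<^sup>2/2)" by (simp flip: exp_add)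
    ultimately show ?thesis by simp
  qed
  show ?thesis
  proof (cases "x \<ge> 0")
    case True then show ?thesis using key by blast
  next
    case False then show ?thesis using key[of "-x"] by (simp add: add.commute)
  qed
qed

lemma card_hcube: "d > 0 \<Longrightarrow> card (hcube d) = 2^d"
  by (simp add: hcube_def card_PiE) (simp add: numeral_2_eq_2)

lemma finite_hcube: "finite (hcube d)"
  by (simp add: hcube_def finite_PiE)

lemma hcube_sq: assumes "d > 0" "v \<in> hcube d" shows "(\<Sum>j<d. (v j)\<^sup>2) = 1"
proof -
  have "\<And>j. j < d \<Longrightarrow> (v j)\<^sup>2 = 1 / real d" using assms
    by (auto simp: hcube_def PiE_def Pi_def power2_eq_square)
  hence "(\<Sum>j<d. (v j)\<^sup>2) = (\<Sum>j<d. 1 / real d)" by simp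
  thus ?thesis using assms by simp
qed

lemma hcube_cs: assumes "d > 0" "v \<in> hcube d"
  shows "\<bar>\<Sum>j<d. v j * z j\<bar> \<le> sqrt (\<Sum>j<d. (z j)\<^sup>2)"
proof -
  have "(\<Sum>j<d. v j * z j)\<^sup>2 \<le> (\<Sum>j<d. (v j)\<^sup>2) * (\<Sum>j<d. (z j)\<^sup>2)"
    by (rule Cauchy_Schwarz_ineq_sum)
  hence "(\<Sum>j<d. v j * z j)\<^sup>2 \<le> (\<Sum>j<d. (z j)\<^sup>2)" using hcube_sq[OF assms] by simp
  thus ?thesis using real_le_rsqrt by (metis real_sqrt_abs real_sqrt_le_iff)
qed

lemma hoeff_one:
  assumes d: "d > 0" and y: "(\<Sum>j<d. (y j)\<^sup>2) = 1" and t: "t \<ge> 0"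
  shows "real (card {v \<in> hcube d. (\<Sum>j<d. v j * y j) \<ge> t}) \<le> 2^d * exp (- real d * t\<^sup>2 / 2)"
proof -
  define a where "a = 1 / sqrt (real d)"
  define l where "l = real d * t"
  have a0: "a > 0" using d by (simp add: a_def)
  have a2: "a\<^sup>2 = 1 / real d" using d by (simp add: a_def power_divide)
  have l0: "l \<ge> 0" using t by (simp add: l_def)
  let ?S = "{v \<in> hcube d. (\<Sum>j<d. v j * y j) \<ge> t}"
  have fS: "finite ?S" using finite_hcube by simp
  have "real (card ?S) * exp (l * t) = (\<Sum>v\<in>?S. exp (l * t))" by simp
  also have "\<dots> \<le> (\<Sum>v\<in>?S. exp (l * (\<Sum>j<d. v j * y j)))"
    by (intro sum_mono) (use l0 in \<open>auto intro: mult_left_mono\<close>)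
  also have "\<dots> \<le> (\<Sum>v\<in>hcube d. exp (l * (\<Sum>j<d. v j * y j)))"
    by (intro sum_mono2 finite_hcube) auto
  also have "\<dots> = (\<Sum>v\<in>hcube d. \<Prod>j<d. exp (l * y j * v j))"
    by (intro sum.cong refl) (simp add: exp_sum sum_distrib_left mult_ac)
  also have "\<dots> = (\<Prod>j<d. \<Sum>u\<in>{-a, a}. exp (l * y j * u))"
    unfolding hcube_def a_def by (subst prod_sum_PiE) (auto simp: atLeast0LessThan)
  also have "\<dots> = (\<Prod>j<d. exp (l * y j * a) + exp (- (l * y j * a)))"
    using a0 by (intro prod.cong refl) (auto simp: add.commute)
  also have "\<dots> \<le> (\<Prod>j<d. 2 * exp ((l * y j * a)\<^sup>2 / 2))"
    by (intro prod_mono) (auto simp: cosh_bound add_nonneg_nonneg)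
  also have "\<dots> = 2^d * exp (\<Sum>j<d. (l * y j * a)\<^sup>2 / 2)"
    by (simp add: prod.distrib exp_sum)
  also have "(\<Sum>j<d. (l * y j * a)\<^sup>2 / 2) = l\<^sup>2 * a\<^sup>2 / 2 * (\<Sum>j<d. (y j)\<^sup>2)"
    by (simp add: sum_distrib_left power_mult_distrib mult_ac)
  also have "\<dots> = real d * t\<^sup>2 / 2" unfolding y a2 l_def using d by (simp add: power2_eq_square)
  finally have "real (card ?S) * exp (l * t) \<le> 2^d * exp (real d * t\<^sup>2 / 2)" .
  hence "real (card ?S) * exp (l * t) * exp (- (l*t)) \<le> 2^d * exp (real d * t\<^sup>2 / 2) * exp (- (l*t))"
    by (intro mult_right_mono) auto
  hence "real (card ?S) \<le> 2^d * (exp (real d * t\<^sup>2 / 2) * exp (- (l*t)))"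
    by (simp add: mult.assoc flip: exp_add)
  also have "exp (real d * t\<^sup>2 / 2) * exp (- (l*t)) = exp (- real d * t\<^sup>2 / 2)"
    by (simp add: l_def power2_eq_square field_simps flip: exp_add)
  finally show ?thesis .
qed

lemma hoeff_abs:
  assumes d: "d > 0" and y: "(\<Sum>j<d. (y j)\<^sup>2) = 1" and t: "t \<ge> 0"
  shows "real (card {v \<in> hcube d. \<bar>\<Sum>j<d. v j * y j\<bar> \<ge> t}) \<le> 2 * 2^d * exp (- real d * t\<^sup>2 / 2)"
proof -
  have y': "(\<Sum>j<d. (- y j)\<^sup>2) = 1" using y by simp
  have eq: "{v \<in> hcube d. \<bar>\<Sum>j<d. v j * y j\<bar> \<ge> t} \<subseteq>
     {v \<in> hcube d. (\<Sum>j<d. v j * y j) \<ge> t} \<union> {v \<in> hcube d. (\<Sum>j<d. v j * - y j) \<ge> t}"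
    by (auto simp: sum_negf abs_if)
  have "card {v \<in> hcube d. \<bar>\<Sum>j<d. v j * y j\<bar> \<ge> t} \<le>
     card ({v \<in> hcube d. (\<Sum>j<d. v j * y j) \<ge> t} \<union> {v \<in> hcube d. (\<Sum>j<d. v j * - y j) \<ge> t})"
    by (intro card_mono eq) (simp add: finite_hcube)
  also have "\<dots> \<le> card {v \<in> hcube d. (\<Sum>j<d. v j * y j) \<ge> t} + card {v \<in> hcube d. (\<Sum>j<d. v j * - y j) \<ge> t}"
    by (rule card_Un_le)
  finally have "real (card {v \<in> hcube d. \<bar>\<Sum>j<d. v j * y j\<bar> \<ge> t}) \<le>
     real (card {v \<in> hcube d. (\<Sum>j<d. v j * y j) \<ge> t}) + real (card {v \<in> hcube d. (\<Sum>j<d. v j * - y j) \<ge> t})"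
    by linarith
  also have "\<dots> \<le> 2^d * exp (- real d * t\<^sup>2 / 2) + 2^d * exp (- real d * t\<^sup>2 / 2)"
    by (intro add_mono hoeff_one[OF d y t] hoeff_one[OF d y' t])
  finally show ?thesis by simp
qed

lemma numeric:
  fixes d :: nat and \<delta> :: real
  assumes d: "real d \<ge> 6561" and \<delta>: "0 < \<delta>" "\<delta> < 1"
  shows "sqrt (s_par d \<delta> / real d) - real d powr (-8) \<ge> 0 \<and>
    real (nat \<lceil>exp (1/32 * s_par d \<delta>)\<rceil>) *
      (2 * exp (- real d * (sqrt (s_par d \<delta> / real d) - real d powr (-8))\<^sup>2 / 2)) \<le> 1/8"
proof -
  define L where "L = ln (real d)"
  define s where "s = s_par d \<delta>"
  define q where "q = real d powr (-\<delta>/4) * L"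
  define t where "t = sqrt (s / real d) - real d powr (-8)"
  have d0: "real d > 0" using d by simp
  have "exp (8::real) = exp 1 ^ 8" by (metis exp_of_nat_mult of_nat_numeral mult.right_neutral)
  also have "\<dots> \<le> 3 ^ 8" by (intro power_mono exp_le) auto
  also have "\<dots> \<le> real d" using d by simp
  finally have "exp 8 \<le> real d" .
  hence L8: "L \<ge> 8" unfolding L_def using d0 by (metis ln_exp ln_le_cancel_iff exp_gt_zero)
  have p1: "real d powr (1 - \<delta>/2) \<ge> 1" using d \<delta> by (intro ge_one_powr_ge_zero) auto
  have sdef: "s = real d powr (1 - \<delta>/2) * L\<^sup>2" by (simp add: s_def s_par_def L_def)
  have "L\<^sup>2 \<ge> 64" using L8 power_mono[of 8 L 2] by simp
  hence "real d powr (1 - \<delta>/2) * L\<^sup>2 \<ge> 1 * 64" using p1 by (intro mult_mono) auto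
  hence s64: "s \<ge> 64" unfolding sdef by simp
  have "real d powr (1 - \<delta>/2) = real d powr (1 + (-\<delta>/2))" by simp
  also have "\<dots> = real d powr 1 * real d powr (-\<delta>/2)" by (rule powr_add)
  also have "\<dots> = real d * real d powr (-\<delta>/2)" using d0 by simp
  finally have "real d powr (1 - \<delta>/2) = real d * real d powr (-\<delta>/2)" .
  hence sd: "s / real d = real d powr (-\<delta>/2) * L\<^sup>2" using d0 unfolding sdef by simp
  have "q\<^sup>2 = (real d powr (-\<delta>/4) * real d powr (-\<delta>/4)) * L\<^sup>2"
    by (simp add: q_def power2_eq_square mult_ac)
  also have "\<dots> = real d powr (-\<delta>/2) * L\<^sup>2" by (simp add: powr_add[symmetric])
  finally have q2: "q\<^sup>2 = s / real d" using sd by simp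
  have q0: "q \<ge> 0" using L8 by (simp add: q_def)
  have sq: "sqrt (s / real d) = q" using q2 q0 by (metis real_sqrt_abs abs_of_nonneg)
  have "real d powr (-8) \<le> real d powr (-\<delta>/4)" using d \<delta> by (intro powr_mono) auto
  also have "\<dots> \<le> q / 2" unfolding q_def using L8 by (simp add: mult_left_mono)
  finally have t2: "t \<ge> q / 2" by (simp add: t_def sq)
  have t0: "t \<ge> 0" using t2 q0 by linarith
  have "(q/2)\<^sup>2 \<le> t\<^sup>2" using t2 q0 by (intro power_mono) auto
  hence "real d * (q/2)\<^sup>2 \<le> real d * t\<^sup>2" by (intro mult_left_mono) auto
  moreover have "real d * (q/2)\<^sup>2 = s / 4" using q2 d0 by (simp add: power_divide)
  ultimately have dt: "real d * t\<^sup>2 \<ge> s / 4" by simp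
  have e1: "exp (- real d * t\<^sup>2 / 2) \<le> exp (- s / 8)" using dt by simp
  have "real (nat \<lceil>exp (1/32 * s)\<rceil>) \<le> exp (1/32 * s) + 1"
  proof -
    have "\<lceil>exp (1/32 * s)\<rceil> \<ge> 0" using ceiling_mono[of 0 "exp (1/32 * s)"] by (simp add: order_less_imp_le)
    hence "real (nat \<lceil>exp (1/32 * s)\<rceil>) = real_of_int \<lceil>exp (1/32 * s)\<rceil>" by simp
    thus ?thesis using of_int_ceiling_le_add_one by simp
  qed
  also have "\<dots> \<le> 2 * exp (1/32 * s)" using s64 by simp
  finally have K: "real (nat \<lceil>exp (1/32 * s)\<rceil>) \<le> 2 * exp (1/32 * s)" .
  have "real (nat \<lceil>exp (1/32 * s)\<rceil>) * (2 * exp (- real d * t\<^sup>2 / 2)) \<le> 2 * exp (1/32 * s) * (2 * exp (- s / 8))"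
    using K e1 by (intro mult_mono) auto
  also have "\<dots> = 4 * exp (- (3 * s / 32))" by (simp flip: exp_add)
  also have "\<dots> \<le> 4 * exp (- 6)" using s64 by simp
  also have "exp (6::real) = exp 1 ^ 6" by (metis exp_of_nat_mult of_nat_numeral mult.right_neutral)
  hence "exp (6::real) \<ge> 2 ^ 6" using exp_ge_add_one_self[of 1] by (metis one_add_one power_mono zero_le_numeral)
  hence "4 * exp (-6::real) \<le> 1/8" by (simp add: exp_minus field_simps)
  finally show ?thesis using t0 unfolding t_def s_def by simp
qed

theorem lemma5p3:
  shows "\<exists>c1::real. c1 > 0 \<and>
    (\<forall>\<delta>::real. 0 < \<delta> \<and> \<delta> < 1 \<longrightarrow>
     (\<forall>kf :: nat \<Rightarrow> nat.
        ((\<lambda>d. ln (real (kf d)) / ln (real d)) \<longlongrightarrow> 1 - \<delta>) at_top \<longrightarrow>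
        (\<exists>d0::nat. \<forall>d\<ge>d0. \<forall>n msg resp bob.
           good_protocol d \<delta> (kf d) n msg resp bob \<longrightarrow>
           (\<forall>A \<in> A_suc d \<delta> msg resp bob.
              \<forall>y :: nat \<Rightarrow> nat \<Rightarrow> real.
                (\<forall>i\<in>{1..nat \<lceil>exp (c1 * s_par d \<delta>)\<rceil>}. unit_vec d (y i)) \<longrightarrow>
                unif_prob (hcube d)
                  (\<lambda>v. (\<forall>i<d div 2. \<bar>\<Sum>j<d. A i j * out_vec msg resp bob A v j\<bar> \<le> xi' d) \<and>
                       (\<forall>i\<in>{1..nat \<lceil>exp (c1 * s_par d \<delta>)\<rceil>}.
                          sqrt (\<Sum>j<d. (out_vec msg resp bob A v j - y i j)\<^sup>2) > real d powr (-8)))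
                \<ge> 1 / 8))))"
proof (intro exI[of _ "1/32::real"] conjI allI impI)
  show "(0::real) < 1/32" by simp
next
  fix \<delta> :: real and kf :: "nat \<Rightarrow> nat"
  assume \<delta>: "0 < \<delta> \<and> \<delta> < 1"
  show "\<exists>d0::nat. \<forall>d\<ge>d0. \<forall>n msg resp bob.
           good_protocol d \<delta> (kf d) n msg resp bob \<longrightarrow>
           (\<forall>A \<in> A_suc d \<delta> msg resp bob.
              \<forall>y :: nat \<Rightarrow> nat \<Rightarrow> real.
                (\<forall>i\<in>{1..nat \<lceil>exp (1/32 * s_par d \<delta>)\<rceil>}. unit_vec d (y i)) \<longrightarrow>
                unif_prob (hcube d)
                  (\<lambda>v. (\<forall>i<d div 2. \<bar>\<Sum>j<d. A i j * out_vec msg resp bob A v j\<bar> \<le> xi' d) \<and>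
                       (\<forall>i\<in>{1..nat \<lceil>exp (1/32 * s_par d \<delta>)\<rceil>}.
                          sqrt (\<Sum>j<d. (out_vec msg resp bob A v j - y i j)\<^sup>2) > real d powr (-8)))
                \<ge> 1 / 8)"
  proof (intro exI[of _ "6561::nat"] allI impI ballI)
    fix d n msg resp bob A and y :: "nat \<Rightarrow> nat \<Rightarrow> real"
    assume d: "d \<ge> (6561::nat)" and gp: "good_protocol d \<delta> (kf d) n msg resp bob"
      and A: "A \<in> A_suc d \<delta> msg resp bob"
      and yu: "\<forall>i\<in>{1..nat \<lceil>exp (1/32 * s_par d \<delta>)\<rceil>}. unit_vec d (y i)"
    define K where "K = nat \<lceil>exp (1/32 * s_par d \<delta>)\<rceil>"
    define t where "t = sqrt (s_par d \<delta> / real d) - real d powr (-8)"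
    define x where "x = out_vec msg resp bob A"
    define P where "P = (\<lambda>v. (\<forall>i<d div 2. \<bar>\<Sum>j<d. A i j * x v j\<bar> \<le> xi' d) \<and>
                       (\<forall>i\<in>{1..K}. sqrt (\<Sum>j<d. (x v j - y i j)\<^sup>2) > real d powr (-8)))"
    have d0: "d > 0" using d by simp
    have num: "t \<ge> 0" "real K * (2 * exp (- real d * t\<^sup>2 / 2)) \<le> 1/8"
      using numeric[of d \<delta>] d \<delta> unfolding K_def t_def by auto
    have yi: "(\<Sum>j<d. (y i j)\<^sup>2) = 1" if "i \<in> {1..K}" for i
      using yu that unfolding K_def unit_vec_def by auto
    let ?H = "hcube d"
    let ?S = "{v \<in> ?H. succeeds d \<delta> A v (x v)}"
    let ?B = "\<lambda>i. {v \<in> ?H. \<bar>\<Sum>j<d. v j * y i j\<bar> \<ge> t}"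
    have sub: "?S \<subseteq> {v \<in> ?H. P v} \<union> (\<Union>i\<in>{1..K}. ?B i)"
    proof
      fix v assume "v \<in> ?S"
      hence vH: "v \<in> ?H" and sc: "succeeds d \<delta> A v (x v)" by auto
      show "v \<in> {v \<in> ?H. P v} \<union> (\<Union>i\<in>{1..K}. ?B i)"
      proof (cases "P v")
        case True thus ?thesis using vH by auto
      next
        case False
        have first: "\<forall>i<d div 2. \<bar>\<Sum>j<d. A i j * x v j\<bar> \<le> xi' d"
          using sc unfolding succeeds_def by blast
        have "\<not> (\<forall>i\<in>{1..K}. sqrt (\<Sum>j<d. (x v j - y i j)\<^sup>2) > real d powr (-8))"
          using False first unfolding P_def by blast
        then obtain i where i: "i \<in> {1..K}" and close: "sqrt (\<Sum>j<d. (x v j - y i j)\<^sup>2) \<le> real d powr (-8)"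
          by (auto simp: not_less)
        have "\<bar>\<Sum>j<d. v j * (x v j - y i j)\<bar> \<le> real d powr (-8)"
          using hcube_cs[OF d0 vH, of "\<lambda>j. x v j - y i j"] close by simp
        moreover have "(\<Sum>j<d. v j * (x v j - y i j)) = (\<Sum>j<d. v j * x v j) - (\<Sum>j<d. v j * y i j)"
          by (simp add: right_diff_distrib sum_subtractf)
        moreover have "\<bar>\<Sum>j<d. v j * x v j\<bar> \<ge> sqrt (s_par d \<delta> / real d)"
          using sc unfolding succeeds_def by simp
        ultimately have "\<bar>\<Sum>j<d. v j * y i j\<bar> \<ge> t" unfolding t_def by linarith
        thus ?thesis using vH i by auto
      qed
    qed
    have fH: "finite ?H" by (rule finite_hcube)
    have "real (card ?S) \<le> real (card ({v \<in> ?H. P v} \<union> (\<Union>i\<in>{1..K}. ?B i)))"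
      using sub fH by (intro of_nat_mono card_mono) auto
    also have "\<dots> \<le> real (card {v \<in> ?H. P v}) + real (card (\<Union>i\<in>{1..K}. ?B i))"
      by (simp only: of_nat_add[symmetric] of_nat_le_iff) (rule card_Un_le)
    also have "real (card (\<Union>i\<in>{1..K}. ?B i)) \<le> (\<Sum>i\<in>{1..K}. real (card (?B i)))"
      by (simp only: of_nat_sum[symmetric] of_nat_le_iff) (rule card_UN_le, simp)
    also have "\<dots> \<le> (\<Sum>i\<in>{1..K}. 2 * 2^d * exp (- real d * t\<^sup>2 / 2))"
      by (intro sum_mono hoeff_abs[OF d0 yi num(1)]) auto
    also have "\<dots> = 2^d * (real K * (2 * exp (- real d * t\<^sup>2 / 2)))" by simp
    also have "\<dots> \<le> 2^d * (1/8)" using num(2) by (intro mult_left_mono) auto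
    finally have c1: "real (card ?S) \<le> real (card {v \<in> ?H. P v}) + 2^d / 8" by simp
    have "unif_prob ?H (\<lambda>v. succeeds d \<delta> A v (out_vec msg resp bob A v)) \<ge> 1/4"
      using A unfolding A_suc_def by auto
    hence "real (card ?S) / 2^d \<ge> 1/4"
      unfolding unif_prob_def x_def using card_hcube[OF d0] by simp
    hence "real (card ?S) \<ge> 2^d / 4" by (simp add: field_simps)
    hence "real (card {v \<in> ?H. P v}) \<ge> 2^d / 8" using c1 by simp
    hence "real (card {v \<in> ?H. P v}) / 2^d \<ge> 1/8" by (simp add: field_simps)
    thus "unif_prob (hcube d)
                  (\<lambda>v. (\<forall>i<d div 2. \<bar>\<Sum>j<d. A i j * out_vec msg resp bob A v j\<bar> \<le> xi' d) \<and>
                       (\<forall>i\<in>{1..nat \<lceil>exp (1/32 * s_par d \<delta>)\<rceil>}.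
                          sqrt (\<Sum>j<d. (out_vec msg resp bob A v j - y i j)\<^sup>2) > real d powr (-8)))
                \<ge> 1 / 8"
      unfolding unif_prob_def P_def x_def K_def using card_hcube[OF d0] by simp
  qed
qed

end
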